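(* Let $\xi_1,\xi_2,\ldots$ be independent, identically distributed, centered real random variables with finite non-zero variance, and put $\xi=\xi_1$ and $S_n = n^{-1/2}\sum_{i=1}^n \xi_i$. Let $g:[0,\infty)\to[0,\infty)$ be a continuous, strictly convex function, positive on $(0,\infty)$, with $\lim_{t\to\infty} g(t)/t=\infty$, $g(0)=g'(0)=0$ and $g''(0)\in(0,\infty)$. Suppose that $$\mathbf{P}(|\xi|>t)\le \exp(-g(t))\quad\text{for all } t\ge 0 .$$ Then there is a constant $C_1\in(0,\infty)$, not depending on $n$ or $t$, such that for all $n\ge 1$ and all $t>0$, $$\max\left\{\mathbf{P}(S_n>t),\ \mathbf{P}(S_n<-t)\right\}\le \exp\left[-n\, g\!\left(\frac{t}{C_1\sqrt{n}}\right)\right],$$ and consequently $$\mathbf{P}(|S_n|>t)\le 2\exp\left[-n\, g\!\left(\frac{t}{C_1\sqrt{n}}\right)\right].$$ *)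

theory Defs
  imports "HOL-Probability.Probability"
begin

definition strict_convex_on :: "real set \<Rightarrow> (real \<Rightarrow> real) \<Rightarrow> bool" where
  "strict_convex_on S f \<longleftrightarrow> convex S \<and>
     (\<forall>x\<in>S. \<forall>y\<in>S. \<forall>u::real. x \<noteq> y \<and> 0 < u \<and> u < 1 \<longrightarrow>
        f ((1 - u) * x + u * y) < (1 - u) * f x + u * f y)"

end

theory Submission
  imports Defs
begin
lemma conv_scale:
  fixes g :: "real \<Rightarrow> real"
  assumes sc: "strict_convex_on {0..} g" and g0: "g 0 = 0" and x: "x \<ge> 0" and k: "k \<ge> 1"
  shows "k * g x \<le> g (k * x)"
proof (cases "k = 1 \<or> x = 0")
  case True then show ?thesis using g0 by auto
next
  case False
  then have k1: "k > 1" and xp: "x > 0" using k x by auto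
  have "g ((1 - 1/k) * 0 + (1/k) * (k*x)) < (1 - 1/k) * g 0 + (1/k) * g (k*x)"
    using sc k1 xp unfolding strict_convex_on_def
    by (intro sc[unfolded strict_convex_on_def, THEN conjunct2, rule_format]) (auto simp: field_simps)
  then have "g x < g (k*x) / k" using k1 g0 by simp
  then show ?thesis using k1 by (simp add: field_simps)
qed

lemma conv_mono:
  fixes g :: "real \<Rightarrow> real"
  assumes sc: "strict_convex_on {0..} g" and g0: "g 0 = 0" and gr: "\<And>t. t \<ge> 0 \<Longrightarrow> g t \<ge> 0"
    and ab: "0 \<le> a" "a \<le> b"
  shows "g a \<le> g b"
proof (cases "a = 0")
  case True then show ?thesis using g0 gr ab by auto
next
  case False
  then have a: "a > 0" using ab by auto
  have "(b/a) * g a \<le> g ((b/a) * a)" using conv_scale[OF sc g0, of a "b/a"] a ab by auto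
  then have "(b/a) * g a \<le> g b" using a by simp
  moreover have "g a \<le> (b/a) * g a" using gr[of a] a ab by (simp add: field_simps mult_right_mono)
  ultimately show ?thesis by linarith
qed

lemma exp_taylor2: "exp (x::real) \<le> 1 + x + x^2 * exp \<bar>x\<bar>"
proof -
  have h1: "exp x - 1 \<le> x * exp x"
    using exp_ge_add_one_self[of "-x"] by (simp add: exp_minus field_simps)
  have h2: "x \<le> exp x - 1" using exp_ge_add_one_self[of x] by linarith
  show ?thesis
  proof (cases "x \<ge> 0")
    case True
    have "exp x - 1 - x \<le> x * (exp x - 1)" using h1 by (simp add: algebra_simps)
    also have "\<dots> \<le> x * (x * exp x)" using h1 True by (intro mult_left_mono) auto
    finally show ?thesis using True by (simp add: power2_eq_square algebra_simps)
  next
    case False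
    have "exp x - 1 - x \<le> x * (exp x - 1)" using h1 by (simp add: algebra_simps)
    also have "\<dots> \<le> x * x" using h2 False by (intro mult_left_mono_neg) auto
    also have "\<dots> \<le> x^2 * exp \<bar>x\<bar>" unfolding power2_eq_square using mult_left_mono[of 1 "exp \<bar>x\<bar>" "x*x"] by simp
    finally show ?thesis by simp
  qed
qed



lemma ennreal_le_suminf_term: "(f i :: ennreal) \<le> (\<Sum>j. f j)"
  using ennreal_suminf_lessD not_le by blast

lemma (in prob_space) exp_moment_disc:
  fixes Y :: "'a \<Rightarrow> real" and g :: "real \<Rightarrow> real"
  assumes Y[measurable]: "Y \<in> borel_measurable M" and a: "a \<ge> 0" and w: "w > 0"
    and tail: "\<And>t. t \<ge> 0 \<Longrightarrow> prob {x\<in>space M. \<bar>Y x\<bar> > t} \<le> exp (- g t)"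
  shows "(\<integral>\<^sup>+x. ennreal (exp (a * \<bar>Y x\<bar>)) \<partial>M) \<le> ennreal (exp (a*w))
     + (\<Sum>j. ennreal (exp (a * ((real j + 2) * w)) * exp (- g ((real j + 1) * w))))"
proof -
  define A where "A = (\<lambda>j::nat. {x\<in>space M. \<bar>Y x\<bar> > (real j + 1) * w})"
  have A[measurable]: "A j \<in> sets M" for j unfolding A_def by measurable
  have pw: "ennreal (exp (a*\<bar>Y x\<bar>)) \<le> ennreal (exp (a*w))
       + (\<Sum>j. ennreal (exp (a * ((real j + 2) * w))) * indicator (A j) x)" if x: "x \<in> space M" for x
  proof (cases "\<bar>Y x\<bar> \<le> w")
    case True
    then have "ennreal (exp (a*\<bar>Y x\<bar>)) \<le> ennreal (exp (a*w))"
      using a by (intro ennreal_leI) (simp add: mult_left_mono)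
    then show ?thesis by (rule order_trans) simp
  next
    case False
    define k where "k = nat (ceiling (\<bar>Y x\<bar> / w) - 2)"
    have q1: "\<bar>Y x\<bar> / w > 1" using False w by simp
    have "real_of_int (ceiling (\<bar>Y x\<bar> / w)) > 1" using q1 le_of_int_ceiling[of "\<bar>Y x\<bar> / w"] by linarith
    then have c2: "ceiling (\<bar>Y x\<bar> / w) \<ge> 2" by simp
    have kk: "real k = real_of_int (ceiling (\<bar>Y x\<bar> / w)) - 2" unfolding k_def using c2 by simp
    have "real_of_int (ceiling (\<bar>Y x\<bar> / w)) - 1 < \<bar>Y x\<bar> / w" by linarith
    then have "(real_of_int (ceiling (\<bar>Y x\<bar> / w)) - 1) * w < \<bar>Y x\<bar>" using w by (simp add: less_divide_eq)
    moreover have e1: "real k + 1 = real_of_int (ceiling (\<bar>Y x\<bar> / w)) - 1" using kk by simp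
    ultimately have l1: "(real k + 1) * w < \<bar>Y x\<bar>" by (simp only: e1)
    have "\<bar>Y x\<bar> / w \<le> real_of_int (ceiling (\<bar>Y x\<bar> / w))" by simp
    then have "\<bar>Y x\<bar> \<le> real_of_int (ceiling (\<bar>Y x\<bar> / w)) * w" using pos_divide_le_eq[OF w] by blast
    moreover have e2: "real k + 2 = real_of_int (ceiling (\<bar>Y x\<bar> / w))" using kk by simp
    ultimately have l2: "\<bar>Y x\<bar> \<le> (real k + 2) * w" by (simp only: e2)
    have "ennreal (exp (a*\<bar>Y x\<bar>)) \<le> ennreal (exp (a * ((real k + 2) * w))) * indicator (A k) x"
      using l1 l2 x a by (auto simp: A_def intro!: ennreal_leI mult_left_mono)
    also have "\<dots> \<le> (\<Sum>j. ennreal (exp (a * ((real j + 2) * w))) * indicator (A j) x)"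
      by (rule ennreal_le_suminf_term)
    finally show ?thesis by (rule order_trans) simp
  qed
  have "(\<integral>\<^sup>+x. ennreal (exp (a * \<bar>Y x\<bar>)) \<partial>M) \<le> (\<integral>\<^sup>+x. ennreal (exp (a*w))
       + (\<Sum>j. ennreal (exp (a * ((real j + 2) * w))) * indicator (A j) x) \<partial>M)"
    by (intro nn_integral_mono pw)
  also have "\<dots> = (\<integral>\<^sup>+x. ennreal (exp (a*w)) \<partial>M)
       + (\<integral>\<^sup>+x. (\<Sum>j. ennreal (exp (a * ((real j + 2) * w))) * indicator (A j) x) \<partial>M)"
    by (rule nn_integral_add) auto
  also have "\<dots> = ennreal (exp (a*w)) + (\<Sum>j. ennreal (exp (a * ((real j + 2) * w))) * emeasure M (A j))"
    by (simp add: nn_integral_suminf nn_integral_cmult_indicator emeasure_space_1)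
  also have "\<dots> \<le> ennreal (exp (a*w)) + (\<Sum>j. ennreal (exp (a * ((real j + 2) * w)) * exp (- g ((real j + 1) * w))))"
  proof -
    have "ennreal (exp (a * ((real j + 2) * w))) * emeasure M (A j)
        \<le> ennreal (exp (a * ((real j + 2) * w)) * exp (- g ((real j + 1) * w)))" for j
    proof -
      have "emeasure M (A j) = ennreal (prob (A j))" by (simp add: emeasure_eq_measure)
      also have "\<dots> \<le> ennreal (exp (- g ((real j + 1) * w)))"
        unfolding A_def using w by (intro ennreal_leI tail) simp
      finally have "emeasure M (A j) \<le> ennreal (exp (- g ((real j + 1) * w)))" .
      then have "ennreal (exp (a * ((real j + 2) * w))) * emeasure M (A j)
        \<le> ennreal (exp (a * ((real j + 2) * w))) * ennreal (exp (- g ((real j + 1) * w)))"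
        by (rule mult_left_mono) simp
      then show ?thesis by (simp add: ennreal_mult)
    qed
    then show ?thesis by (intro add_mono order_refl suminf_le) auto
  qed
  finally show ?thesis .
qed



lemma g_quad_small:
  fixes g :: "real \<Rightarrow> real"
  assumes g_cont: "continuous_on {0..} g" and g0: "g 0 = 0"
    and g_deriv: "\<exists>\<delta>>0. \<exists>g' c.
        (\<forall>t\<in>{0..<\<delta>}. (g has_real_derivative g' t) (at t within {0..}))
        \<and> g' 0 = 0 \<and> (g' has_real_derivative c) (at 0 within {0..}) \<and> 0 < c"
  shows "\<exists>d>0. \<exists>B>0. \<forall>v. 0 < v \<and> v < d \<longrightarrow> g v \<le> B * v^2"
proof -
  obtain \<delta> gd c where dp: "\<delta> > 0" and hd: "\<forall>t\<in>{0..<\<delta>}. (g has_real_derivative gd t) (at t within {0..})"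
    and gd0: "gd 0 = 0" and hc: "(gd has_real_derivative c) (at 0 within {0..})" and cp: "c > 0"
    using g_deriv by blast
  have "((\<lambda>y. (gd y - gd 0) / (y - 0)) \<longlongrightarrow> c) (at 0 within {0..})"
    using hc by (simp add: has_field_derivative_iff)
  then have "eventually (\<lambda>y. (gd y - gd 0) / (y - 0) < c + 1) (at 0 within {0..})"
    by (rule order_tendstoD) simp
  then obtain d where d: "d > 0" and hdd: "\<And>y. y \<in> {0..} \<Longrightarrow> y \<noteq> 0 \<Longrightarrow> dist y 0 < d \<Longrightarrow> (gd y - gd 0) / (y - 0) < c + 1"
    unfolding eventually_at by blast
  define d' where "d' = min \<delta> d"
  have "\<forall>v. 0 < v \<and> v < d' \<longrightarrow> g v \<le> (c+1) * v^2"
  proof (intro allI impI)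
    fix v assume v: "0 < v \<and> v < d'"
    have cont: "continuous_on {0..v} g" using g_cont by (rule continuous_on_subset) auto
    have der: "(g has_real_derivative gd x) (at x)" if "0 < x" "x < v" for x
    proof -
      have "(g has_real_derivative gd x) (at x within {0..})" using hd that v unfolding d'_def by auto
      moreover have "at x within {0..} = at x" using that by (intro at_within_interior) simp
      ultimately show ?thesis by simp
    qed
    obtain l z where z: "0 < z" "z < v" and dz: "(g has_real_derivative l) (at z)" and eq: "g v - g 0 = (v - 0) * l"
      using MVT[OF _ cont, of] v der real_differentiable_def by (metis (no_types, lifting))
    have "l = gd z" using DERIV_unique[OF dz der[OF z]] .
    have "gd z / z < c + 1" using hdd[of z] z v gd0 unfolding d'_def by auto
    then have "gd z < (c+1) * z" using z by (simp add: divide_less_eq)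
    then have "g v \<le> v * ((c+1) * z)" using eq g0 \<open>l = gd z\<close> v by (simp add: mult_left_mono)
    also have "\<dots> \<le> (c+1) * v^2" using z cp v by (simp add: power2_eq_square mult_left_mono)
    finally show "g v \<le> (c+1) * v^2" .
  qed
  moreover have "d' > 0" "c + 1 > 0" using dp d cp unfolding d'_def by auto
  ultimately show ?thesis by blast
qed



lemma (in prob_space) exp2_integrable:
  fixes Y :: "'a \<Rightarrow> real" and g :: "real \<Rightarrow> real"
  assumes Y[measurable]: "Y \<in> borel_measurable M"
    and tail: "\<And>t. t \<ge> 0 \<Longrightarrow> prob {x\<in>space M. \<bar>Y x\<bar> > t} \<le> exp (- g t)"
    and sc: "strict_convex_on {0..} g" and g0: "g 0 = 0"
    and g_super: "filterlim (\<lambda>t. g t / t) at_top at_top"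
  shows "integrable M (\<lambda>x. exp (2 * \<bar>Y x\<bar>))"
proof -
  have "eventually (\<lambda>t. 4 \<le> g t / t) at_top" using g_super by (simp add: filterlim_at_top)
  then obtain N where N: "\<And>t. t \<ge> N \<Longrightarrow> 4 \<le> g t / t" unfolding eventually_at_top_linorder by blast
  define w where "w = max N 1"
  have w: "w > 0" unfolding w_def by simp
  have gw: "4 * w \<le> g w" using N[of w] w unfolding w_def by (simp add: le_divide_eq)
  define q where "q = exp (- 2 * w)"
  have q: "0 < q" "q < 1" unfolding q_def using w by auto
  have tm: "exp (2 * ((real j + 2) * w)) * exp (- g ((real j + 1) * w)) \<le> q ^ j" for j
  proof -
    have "(real j + 1) * g w \<le> g ((real j + 1) * w)" using conv_scale[OF sc g0, of w "real j + 1"] w by simp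
    then have "4 * w * (real j + 1) \<le> g ((real j + 1) * w)" using gw
      by (smt (verit) mult.commute mult_right_mono of_nat_0_le_iff)
    then have "2 * ((real j + 2) * w) + - g ((real j + 1) * w) \<le> - 2 * w * real j"
      by (simp add: algebra_simps)
    then have "exp (2 * ((real j + 2) * w) + - g ((real j + 1) * w)) \<le> exp (- 2 * w * real j)" by simp
    then show ?thesis unfolding q_def by (simp add: exp_add[symmetric] exp_of_nat_mult[symmetric] mult.commute)
  qed
  have "(\<integral>\<^sup>+x. ennreal (exp (2 * \<bar>Y x\<bar>)) \<partial>M) \<le> ennreal (exp (2*w))
     + (\<Sum>j. ennreal (exp (2 * ((real j + 2) * w)) * exp (- g ((real j + 1) * w))))"
    by (rule exp_moment_disc[OF Y _ w tail]) auto
  also have "\<dots> \<le> ennreal (exp (2*w)) + (\<Sum>j. ennreal (q ^ j))"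
    by (intro add_mono order_refl suminf_le ennreal_leI tm) auto
  also have "\<dots> = ennreal (exp (2*w)) + ennreal (\<Sum>j. q ^ j)"
    using q by (subst suminf_ennreal2) auto
  also have "\<dots> < \<infinity>" by (simp add: ennreal_plus[symmetric] del: ennreal_plus)
  finally show ?thesis by (intro integrableI_bounded) auto
qed



lemma (in prob_space) mgf_small:
  fixes Y :: "'a \<Rightarrow> real"
  assumes Y[measurable]: "Y \<in> borel_measurable M"
    and I2: "integrable M (\<lambda>x. exp (2 * \<bar>Y x\<bar>))"
    and E0: "expectation Y = 0" and mu: "0 \<le> \<mu>" "\<mu> \<le> 1"
  shows "(\<integral>\<^sup>+x. ennreal (exp (\<mu> * Y x)) \<partial>M) \<le> ennreal (1 + \<mu>^2 * expectation (\<lambda>x. (Y x)^2 * exp \<bar>Y x\<bar>))"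
proof -
  have IY: "integrable M Y"
  proof (rule Bochner_Integration.integrable_bound[OF I2])
    show "AE x in M. norm (Y x) \<le> norm (exp (2 * \<bar>Y x\<bar>))"
    proof (intro AE_I2)
      fix x
      have "\<bar>Y x\<bar> \<le> exp (2 * \<bar>Y x\<bar>)" using exp_ge_add_one_self[of "2*\<bar>Y x\<bar>"] abs_ge_zero[of "Y x"] by linarith
      then show "norm (Y x) \<le> norm (exp (2 * \<bar>Y x\<bar>))" by simp
    qed
  qed auto
  have IE: "integrable M (\<lambda>x. exp (\<mu> * Y x))"
  proof (rule Bochner_Integration.integrable_bound[OF I2])
    show "AE x in M. norm (exp (\<mu> * Y x)) \<le> norm (exp (2 * \<bar>Y x\<bar>))"
    proof (intro AE_I2)
      fix x
      have "\<bar>\<mu> * Y x\<bar> \<le> \<bar>Y x\<bar>" using mu by (simp add: abs_mult mult_left_le_one_le)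
      then have "\<mu> * Y x \<le> \<bar>Y x\<bar>" using abs_ge_self[of "\<mu> * Y x"] by linarith
      then show "norm (exp (\<mu> * Y x)) \<le> norm (exp (2 * \<bar>Y x\<bar>))" by simp
    qed
  qed auto
  have sq: "(Y x)^2 * exp \<bar>Y x\<bar> \<le> 4 * exp (2 * \<bar>Y x\<bar>)" for x
  proof -
    have "\<bar>Y x\<bar> / 2 \<le> exp (\<bar>Y x\<bar> / 2)" using exp_ge_add_one_self[of "\<bar>Y x\<bar> / 2"] by linarith
    then have h: "(\<bar>Y x\<bar> / 2)^2 \<le> (exp (\<bar>Y x\<bar> / 2))^2" by (intro power_mono) auto
    have h1: "(exp (\<bar>Y x\<bar> / 2))^2 = exp \<bar>Y x\<bar>"
      by (metis exp_double field_sum_of_halves mult.commute mult_2_right)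
    have h2: "(\<bar>Y x\<bar> / 2)^2 = (Y x)^2 / 4" by (simp add: power_divide)
    from h have "(Y x)^2 / 4 \<le> exp \<bar>Y x\<bar>" by (simp only: h1 h2)
    then have "(Y x)^2 \<le> 4 * exp \<bar>Y x\<bar>" by simp
    then have "(Y x)^2 * exp \<bar>Y x\<bar> \<le> (4 * exp \<bar>Y x\<bar>) * exp \<bar>Y x\<bar>" by (rule mult_right_mono) simp
    moreover have e: "exp (2 * \<bar>Y x\<bar>) = exp \<bar>Y x\<bar> * exp \<bar>Y x\<bar>" by (metis exp_add mult_2)
    ultimately show ?thesis by (simp only: e mult.assoc)
  qed
  have IK: "integrable M (\<lambda>x. (Y x)^2 * exp \<bar>Y x\<bar>)"
  proof (rule Bochner_Integration.integrable_bound[of _ "\<lambda>x. 4 * exp (2 * \<bar>Y x\<bar>)"])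
    show "integrable M (\<lambda>x. 4 * exp (2 * \<bar>Y x\<bar>))" using I2 by simp
    show "AE x in M. norm ((Y x)^2 * exp \<bar>Y x\<bar>) \<le> norm (4 * exp (2 * \<bar>Y x\<bar>))"
      using sq by (auto intro!: AE_I2)
  qed auto
  have pw: "exp (\<mu> * Y x) \<le> 1 + \<mu> * Y x + \<mu>^2 * ((Y x)^2 * exp \<bar>Y x\<bar>)" for x
  proof -
    have "exp (\<mu> * Y x) \<le> 1 + \<mu> * Y x + (\<mu> * Y x)^2 * exp \<bar>\<mu> * Y x\<bar>" by (rule exp_taylor2)
    also have "(\<mu> * Y x)^2 * exp \<bar>\<mu> * Y x\<bar> \<le> \<mu>^2 * ((Y x)^2 * exp \<bar>Y x\<bar>)"
    proof -
      have "\<bar>\<mu> * Y x\<bar> \<le> \<bar>Y x\<bar>" using mu by (simp add: abs_mult mult_left_le_one_le)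
      then have "exp \<bar>\<mu> * Y x\<bar> \<le> exp \<bar>Y x\<bar>" by simp
      then have "(Y x)^2 * exp \<bar>\<mu> * Y x\<bar> \<le> (Y x)^2 * exp \<bar>Y x\<bar>" by (rule mult_left_mono) simp
      then have "\<mu>^2 * ((Y x)^2 * exp \<bar>\<mu> * Y x\<bar>) \<le> \<mu>^2 * ((Y x)^2 * exp \<bar>Y x\<bar>)" by (rule mult_left_mono) simp
      then show ?thesis by (simp add: power_mult_distrib mult.assoc)
    qed
    finally show ?thesis by simp
  qed
  have "(\<integral>\<^sup>+x. ennreal (exp (\<mu> * Y x)) \<partial>M) = ennreal (expectation (\<lambda>x. exp (\<mu> * Y x)))"
    using IE by (intro nn_integral_eq_integral) auto
  also have "expectation (\<lambda>x. exp (\<mu> * Y x)) \<le> expectation (\<lambda>x. 1 + \<mu> * Y x + \<mu>^2 * ((Y x)^2 * exp \<bar>Y x\<bar>))"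
    using IE IY IK pw by (intro integral_mono) auto
  also have "\<dots> = 1 + \<mu>^2 * expectation (\<lambda>x. (Y x)^2 * exp \<bar>Y x\<bar>)"
    using IY IK E0 by (simp add: prob_space)
  finally show ?thesis by (simp add: ennreal_leI)
qed



lemma exp_ineq_large:
  assumes g: "(g::real) \<ge> 4" shows "exp (g/16) + 1 \<le> exp g"
proof -
  have a: "exp (g/16) * exp (15*g/16) = exp g" by (simp add: exp_add[symmetric])
  have "1 + 15*g/16 \<le> exp (15*g/16)" by (rule exp_ge_add_one_self)
  then have b: "exp (g/16) * (1 + 15*g/16) \<le> exp (g/16) * exp (15*g/16)" by (intro mult_left_mono) auto
  have c1: "1 \<le> exp (g/16)" using g by simp
  have c2: "1 \<le> 15*g/16" using g by simp
  have "1 * 1 \<le> exp (g/16) * (15*g/16)" using c1 c2 by (intro mult_mono) auto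
  then have c: "1 \<le> exp (g/16) * (15*g/16)" by simp
  show ?thesis using a b c by (simp add: algebra_simps)
qed



lemma (in prob_space) mgf_bound:
  fixes X1 :: "'a \<Rightarrow> real" and g :: "real \<Rightarrow> real"
  assumes X1[measurable]: "X1 \<in> borel_measurable M"
    and E0: "expectation X1 = 0"
    and tail: "\<And>t. t \<ge> 0 \<Longrightarrow> prob {x\<in>space M. \<bar>X1 x\<bar> > t} \<le> exp (- g t)"
    and gr: "\<And>t. t \<ge> 0 \<Longrightarrow> g t \<ge> 0"
    and g_cont: "continuous_on {0..} g"
    and sc: "strict_convex_on {0..} g" and g0: "g 0 = 0"
    and g_super: "filterlim (\<lambda>t. g t / t) at_top at_top"
    and g_deriv: "\<exists>\<delta>>0. \<exists>g' c.
        (\<forall>t\<in>{0..<\<delta>}. (g has_real_derivative g' t) (at t within {0..}))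
        \<and> g' 0 = 0 \<and> (g' has_real_derivative c) (at 0 within {0..}) \<and> 0 < c"
  shows "\<exists>C\<ge>32. \<forall>\<sigma>\<in>{1,-1::real}. \<forall>v>0.
     (\<integral>\<^sup>+x. ennreal (exp (2 * g v / (C * v) * (\<sigma> * X1 x))) \<partial>M) \<le> ennreal (exp (g v))"
proof -
  obtain d B where d: "d > 0" and B: "B > 0" and small: "\<And>v. 0 < v \<Longrightarrow> v < d \<Longrightarrow> g v \<le> B * v^2"
    using g_quad_small[OF g_cont g0 g_deriv] by blast
  have I2: "integrable M (\<lambda>x. exp (2 * \<bar>X1 x\<bar>))"
    by (rule exp2_integrable[OF X1 tail sc g0 g_super])
  define K where "K = expectation (\<lambda>x. (X1 x)^2 * exp \<bar>X1 x\<bar>)"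
  have K: "K \<ge> 0" unfolding K_def by (intro integral_nonneg_AE) auto
  define Bq where "Bq = max B (4 / d^2)"
  define D where "D = 4 / d + B * d"
  define C where "C = 32 + 2 * D + 4 * K * Bq + 1"
  have Bq: "Bq > 0" unfolding Bq_def using B by simp
  have D: "D > 0" unfolding D_def using B d by (intro add_pos_pos) auto
  have C32: "C \<ge> 32" unfolding C_def using D K Bq by simp
  have CD: "C \<ge> 2 * D" unfolding C_def using D K Bq by simp
  have CK: "C * C \<ge> 4 * K * Bq"
  proof -
    have "C \<ge> 1" using C32 by simp
    then have "C * C \<ge> C" by simp
    moreover have "C \<ge> 4 * K * Bq" unfolding C_def using D by simp
    ultimately show ?thesis by linarith
  qed
  have main: "(\<integral>\<^sup>+x. ennreal (exp (2 * g v / (C * v) * (\<sigma> * X1 x))) \<partial>M) \<le> ennreal (exp (g v))"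
    if s: "\<sigma> \<in> {1,-1::real}" and v: "v > 0" for \<sigma> v
  proof -
    define \<mu> where "\<mu> = 2 * g v / (C * v)"
    have gv: "g v \<ge> 0" using gr v by simp
    have mu0: "\<mu> \<ge> 0" unfolding \<mu>_def using gv v C32 by simp
    have absY: "\<bar>\<sigma> * X1 x\<bar> = \<bar>X1 x\<bar>" for x using s by (auto simp: abs_mult)
    show ?thesis
    proof (cases "g v \<ge> 4")
      case True
      have "(\<integral>\<^sup>+x. ennreal (exp (\<mu> * (\<sigma> * X1 x))) \<partial>M) \<le> (\<integral>\<^sup>+x. ennreal (exp (\<mu> * \<bar>X1 x\<bar>)) \<partial>M)"
      proof (intro nn_integral_mono ennreal_leI)
        fix x
        have "\<mu> * (\<sigma> * X1 x) \<le> \<mu> * \<bar>X1 x\<bar>" using mu0 absY[of x] abs_ge_self[of "\<sigma> * X1 x"]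
          by (intro mult_left_mono) auto
        then show "exp (\<mu> * (\<sigma> * X1 x)) \<le> exp (\<mu> * \<bar>X1 x\<bar>)" by simp
      qed
      also have "\<dots> \<le> ennreal (exp (\<mu> * v))
          + (\<Sum>j. ennreal (exp (\<mu> * ((real j + 2) * v)) * exp (- g ((real j + 1) * v))))"
        by (rule exp_moment_disc[OF X1 mu0 v tail])
      also have "\<dots> \<le> ennreal (exp (g v / 16)) + (\<Sum>j. ennreal (exp (-2) * exp (-2) ^ j))"
      proof (intro add_mono suminf_le ennreal_leI)
        have "\<mu> * v = 2 * g v / C" unfolding \<mu>_def using v by simp
        also have "\<dots> \<le> 2 * g v / 32" using C32 gv by (intro divide_left_mono) auto
        also have "\<dots> = g v / 16" by simp
        finally show "exp (\<mu> * v) \<le> exp (g v / 16)" by simp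
      next
        fix j :: nat
        have mv: "\<mu> * v \<le> g v / 16"
        proof -
          have "\<mu> * v = 2 * g v / C" unfolding \<mu>_def using v by simp
          also have "\<dots> \<le> 2 * g v / 32" using C32 gv by (intro divide_left_mono) auto
        also have "\<dots> = g v / 16" by simp
          finally show ?thesis .
        qed
        have "(real j + 1) * g v \<le> g ((real j + 1) * v)" using conv_scale[OF sc g0, of v "real j + 1"] v by simp
        moreover have "\<mu> * ((real j + 2) * v) \<le> (real j + 2) * (g v / 16)"
        proof -
          have "\<mu> * ((real j + 2) * v) = (real j + 2) * (\<mu> * v)" by (simp add: algebra_simps)
          also have "\<dots> \<le> (real j + 2) * (g v / 16)" using mv by (intro mult_left_mono) auto
          finally show ?thesis .
        qed
        ultimately have "\<mu> * ((real j + 2) * v) + - g ((real j + 1) * v) \<le> (real j + 2) * (g v / 16) - (real j + 1) * g v"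
          by linarith
        also have "\<dots> \<le> -2 * (real j + 1)"
        proof -
          have "(real j + 2) * (g v / 16) - (real j + 1) * g v = - g v * (15 * real j + 14) / 16"
            by (simp add: algebra_simps)
          also have "\<dots> \<le> - 4 * (15 * real j + 14) / 16"
          proof -
            have "4 * (15 * real j + 14) \<le> g v * (15 * real j + 14)" using True by (intro mult_right_mono) auto
            then show ?thesis by simp
          qed
          also have "\<dots> \<le> -2 * (real j + 1)" by simp
          finally show ?thesis .
        qed
        finally have "exp (\<mu> * ((real j + 2) * v) + - g ((real j + 1) * v)) \<le> exp (-2 * (real j + 1))" by simp
        also have "\<dots> = exp (-2) * exp (-2) ^ j"
          by (simp add: exp_add[symmetric] exp_of_nat_mult[symmetric] algebra_simps)
        finally show "exp (\<mu> * ((real j + 2) * v)) * exp (- g ((real j + 1) * v)) \<le> exp (-2) * exp (-2) ^ j"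
          by (simp only: exp_add[symmetric])
      qed auto
      also have "\<dots> = ennreal (exp (g v / 16)) + ennreal (\<Sum>j. exp (-2) * exp (-2::real) ^ j)"
        by (subst suminf_ennreal2) (auto intro!: summable_mult summable_geometric)
      also have "\<dots> \<le> ennreal (exp (g v / 16)) + ennreal 1"
      proof -
        have q: "exp (-2::real) \<le> 1/2"
        proof -
          have "2 \<le> exp (2::real)" using exp_ge_add_one_self[of 2] by simp
          then show ?thesis by (simp add: exp_minus field_simps)
        qed
        have "(\<Sum>j. exp (-2) * exp (-2::real) ^ j) = exp (-2) / (1 - exp (-2))"
          by (simp add: suminf_mult suminf_geometric summable_geometric divide_inverse)
        also have "\<dots> \<le> 1" using q by (simp add: divide_le_eq)
        finally show ?thesis by (intro add_mono order_refl ennreal_leI)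
      qed
      also have "\<dots> = ennreal (exp (g v / 16) + 1)" by (rule ennreal_plus[symmetric]) auto
      also have "\<dots> \<le> ennreal (exp (g v))" using exp_ineq_large[OF True] by (intro ennreal_leI)
      finally show ?thesis unfolding \<mu>_def .
    next
      case False
      then have g4: "g v < 4" by simp
      have gvD: "g v / v \<le> D"
      proof (cases "v < d")
        case True
        have "g v / v \<le> B * v^2 / v" using small[OF v True] v by (simp add: divide_right_mono)
        also have "\<dots> = B * v" by (simp add: power2_eq_square)
        also have "\<dots> \<le> B * d" using True B by simp
        moreover have "4 / d > 0" using d by simp
        ultimately show ?thesis unfolding D_def by linarith
      next
        case False
        have "g v / v \<le> 4 / v" using g4 v by (simp add: divide_right_mono)
        also have "\<dots> \<le> 4 / d" using False d by (simp add: frac_le)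
        moreover have "B * d > 0" using B d by simp
        ultimately show ?thesis unfolding D_def by linarith
      qed
      have gvB: "g v \<le> Bq * v^2"
      proof (cases "v < d")
        case True
        then show ?thesis using small[OF v True] unfolding Bq_def
          by (smt (verit) max.cobounded1 mult_right_mono zero_le_power2)
      next
        case False
        have "d^2 \<le> v^2" using False d by (simp add: power_mono)
        then have "4 \<le> 4 / d^2 * v^2" using d by (simp add: field_simps)
        also have "\<dots> \<le> Bq * v^2" unfolding Bq_def by (intro mult_right_mono) auto
        finally show ?thesis using g4 by simp
      qed
      have mu1: "\<mu> \<le> 1"
      proof -
        have "\<mu> = 2 * (g v / v) / C" unfolding \<mu>_def by simp
        also have "\<dots> \<le> 2 * D / C" using gvD C32 by (intro divide_right_mono mult_left_mono) auto
        also have "\<dots> \<le> 1" using CD C32 by simp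
        finally show ?thesis .
      qed
      have Ys[measurable]: "(\<lambda>x. \<sigma> * X1 x) \<in> borel_measurable M" by simp
      have I2Y: "integrable M (\<lambda>x. exp (2 * \<bar>\<sigma> * X1 x\<bar>))" using I2 by (simp add: absY)
      have E0Y: "expectation (\<lambda>x. \<sigma> * X1 x) = 0" using E0 by simp
      have KY: "expectation (\<lambda>x. (\<sigma> * X1 x)^2 * exp \<bar>\<sigma> * X1 x\<bar>) = K"
        unfolding K_def using s by (auto simp: absY power_mult_distrib)
      have "(\<integral>\<^sup>+x. ennreal (exp (\<mu> * (\<sigma> * X1 x))) \<partial>M) \<le> ennreal (1 + \<mu>^2 * K)"
        using mgf_small[OF Ys I2Y E0Y mu0 mu1] KY by simp
      also have "\<dots> \<le> ennreal (exp (\<mu>^2 * K))" by (intro ennreal_leI) (rule exp_ge_add_one_self[of "\<mu>^2 * K", simplified add.commute])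
      also have "\<dots> \<le> ennreal (exp (g v))"
      proof (intro ennreal_leI, simp)
        have eq: "\<mu>^2 = 4 * g v * (g v / v^2) / (C * C)" unfolding \<mu>_def by (simp add: power2_eq_square field_simps)
        have "g v / v^2 \<le> Bq" using gvB v by (simp add: divide_le_eq)
        then have "4 * g v * (g v / v^2) \<le> 4 * g v * Bq" using gv by (intro mult_left_mono) auto
        then have le: "4 * g v * (g v / v^2) / (C * C) \<le> 4 * g v * Bq / (C * C)" by (rule divide_right_mono) simp
        have "\<mu>^2 \<le> 4 * g v * Bq / (C * C)" unfolding eq by (rule le)
        then have "\<mu>^2 * K \<le> 4 * g v * Bq / (C * C) * K" using K by (rule mult_right_mono)
        also have "\<dots> = g v * ((4 * K * Bq) / (C * C))" by (simp add: field_simps)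
        also have "\<dots> \<le> g v * 1" using CK C32 gv by (intro mult_left_mono) (auto simp: divide_le_eq)
        finally show "\<mu>^2 * K \<le> g v" by simp
      qed
      finally show ?thesis unfolding \<mu>_def .
    qed
  qed
  show ?thesis using C32 main by blast
qed



lemma (in prob_space) chernoff_sum:
  fixes X :: "nat \<Rightarrow> 'a \<Rightarrow> real" and g :: "real \<Rightarrow> real"
  assumes rv: "\<And>i. i \<ge> 1 \<Longrightarrow> X i \<in> borel_measurable M"
    and indep: "indep_vars (\<lambda>_. borel) X {1..}"
    and ident: "\<And>i. i \<ge> 1 \<Longrightarrow> distr M borel (X i) = distr M borel (X 1)"
    and gr: "\<And>t. t \<ge> 0 \<Longrightarrow> g t \<ge> 0"
    and C: "C > 0"
    and mb: "\<And>v. v > 0 \<Longrightarrow> (\<integral>\<^sup>+x. ennreal (exp (2 * g v / (C * v) * (\<sigma> * X 1 x))) \<partial>M) \<le> ennreal (exp (g v))"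
    and n: "n \<ge> 1" and t: "t > 0"
  shows "prob {x\<in>space M. \<sigma> * ((\<Sum>i=1..n. X i x) / sqrt (real n)) > t} \<le> exp (- real n * g (t / (C * sqrt (real n))))"
proof -
  define v where "v = t / (C * sqrt (real n))"
  define \<mu> where "\<mu> = 2 * g v / (C * v)"
  define a where "a = t * sqrt (real n)"
  have sn: "sqrt (real n) > 0" using n by simp
  have v: "v > 0" unfolding v_def using t C sn by simp
  have mu0: "\<mu> \<ge> 0" unfolding \<mu>_def using gr[of v] v C by simp
  have rvs[measurable]: "(\<lambda>x. \<Sum>i=1..n. X i x) \<in> borel_measurable M"
    by (intro borel_measurable_sum) (auto intro: rv)
  have rvi[measurable]: "X i \<in> borel_measurable M" if "i \<in> {1..n}" for i using rv that by simp
  define A where "A = {x\<in>space M. \<sigma> * ((\<Sum>i=1..n. X i x) / sqrt (real n)) > t}"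
  have A[measurable]: "A \<in> sets M" unfolding A_def by measurable
  have "emeasure M A = (\<integral>\<^sup>+x. indicator A x \<partial>M)" by simp
  also have "\<dots> \<le> (\<integral>\<^sup>+x. ennreal (exp (\<mu> * (\<sigma> * (\<Sum>i=1..n. X i x)) - \<mu> * a)) \<partial>M)"
  proof (intro nn_integral_mono)
    fix x assume x: "x \<in> space M"
    show "indicator A x \<le> ennreal (exp (\<mu> * (\<sigma> * (\<Sum>i=1..n. X i x)) - \<mu> * a))"
    proof (cases "x \<in> A")
      case True
      then have "\<sigma> * (\<Sum>i=1..n. X i x) / sqrt (real n) > t" unfolding A_def by simp
      then have "\<sigma> * (\<Sum>i=1..n. X i x) > a" unfolding a_def using sn by (simp add: less_divide_eq)
      then have "\<mu> * (\<sigma> * (\<Sum>i=1..n. X i x)) - \<mu> * a \<ge> 0" using mu0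
        by (simp add: right_diff_distrib[symmetric] mult_nonneg_nonneg)
      then show ?thesis using True by simp
    qed simp
  qed
  also have "\<dots> = (\<integral>\<^sup>+x. ennreal (exp (- \<mu> * a)) * (\<Prod>i\<in>{1..n}. ennreal (exp (\<mu> * (\<sigma> * X i x)))) \<partial>M)"
  proof (intro nn_integral_cong)
    fix x
    have "exp (\<mu> * (\<sigma> * (\<Sum>i=1..n. X i x)) - \<mu> * a) = exp (- \<mu> * a) * exp (\<Sum>i=1..n. \<mu> * (\<sigma> * X i x))"
      by (simp add: exp_add[symmetric] sum_distrib_left)
    also have "\<dots> = exp (- \<mu> * a) * (\<Prod>i\<in>{1..n}. exp (\<mu> * (\<sigma> * X i x)))" by (simp add: exp_sum)
    finally show "ennreal (exp (\<mu> * (\<sigma> * (\<Sum>i=1..n. X i x)) - \<mu> * a)) =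
       ennreal (exp (- \<mu> * a)) * (\<Prod>i\<in>{1..n}. ennreal (exp (\<mu> * (\<sigma> * X i x))))"
      by (simp add: ennreal_mult prod_ennreal prod_nonneg)
  qed
  also have "\<dots> = ennreal (exp (- \<mu> * a)) * (\<integral>\<^sup>+x. (\<Prod>i\<in>{1..n}. ennreal (exp (\<mu> * (\<sigma> * X i x)))) \<partial>M)"
    by (rule nn_integral_cmult) measurable
  also have "(\<integral>\<^sup>+x. (\<Prod>i\<in>{1..n}. ennreal (exp (\<mu> * (\<sigma> * X i x)))) \<partial>M)
      = (\<Prod>i\<in>{1..n}. \<integral>\<^sup>+x. ennreal (exp (\<mu> * (\<sigma> * X i x))) \<partial>M)"
  proof (rule indep_vars_nn_integral)
    have "indep_vars (\<lambda>_. borel) X {1..n}" by (rule indep_vars_subset[OF indep]) auto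
    then show "indep_vars (\<lambda>_. borel) (\<lambda>i x. ennreal (exp (\<mu> * (\<sigma> * X i x)))) {1..n}"
      by (rule indep_vars_compose2[where Y="\<lambda>i z. ennreal (exp (\<mu> * (\<sigma> * z)))"]) measurable
  qed auto
  also have "(\<Prod>i\<in>{1..n}. \<integral>\<^sup>+x. ennreal (exp (\<mu> * (\<sigma> * X i x))) \<partial>M) = (\<Prod>i\<in>{1..n}. \<integral>\<^sup>+x. ennreal (exp (\<mu> * (\<sigma> * X 1 x))) \<partial>M)"
  proof (intro prod.cong refl)
    fix i assume i: "i \<in> {1..n}"
    have "(\<integral>\<^sup>+x. ennreal (exp (\<mu> * (\<sigma> * X i x))) \<partial>M) = (\<integral>\<^sup>+z. ennreal (exp (\<mu> * (\<sigma> * z))) \<partial>distr M borel (X i))"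
      using i by (subst nn_integral_distr) (auto intro: rv)
    also have "\<dots> = (\<integral>\<^sup>+z. ennreal (exp (\<mu> * (\<sigma> * z))) \<partial>distr M borel (X 1))" using i ident[of i] by simp
    also have "\<dots> = (\<integral>\<^sup>+x. ennreal (exp (\<mu> * (\<sigma> * X 1 x))) \<partial>M)"
      by (subst nn_integral_distr) (auto intro: rv)
    finally show "(\<integral>\<^sup>+x. ennreal (exp (\<mu> * (\<sigma> * X i x))) \<partial>M) = (\<integral>\<^sup>+x. ennreal (exp (\<mu> * (\<sigma> * X 1 x))) \<partial>M)" .
  qed
  also have "(\<Prod>i\<in>{1..n}. \<integral>\<^sup>+x. ennreal (exp (\<mu> * (\<sigma> * X 1 x))) \<partial>M) = (\<integral>\<^sup>+x. ennreal (exp (\<mu> * (\<sigma> * X 1 x))) \<partial>M) ^ n" by simp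
  finally have step1: "emeasure M A \<le> ennreal (exp (- \<mu> * a)) * (\<integral>\<^sup>+x. ennreal (exp (\<mu> * (\<sigma> * X 1 x))) \<partial>M) ^ n" .
  have "(\<integral>\<^sup>+x. ennreal (exp (\<mu> * (\<sigma> * X 1 x))) \<partial>M) ^ n \<le> ennreal (exp (g v)) ^ n"
    using mb[OF v] unfolding \<mu>_def by (intro power_mono) auto
  then have step2: "emeasure M A \<le> ennreal (exp (- \<mu> * a)) * ennreal (exp (g v)) ^ n"
    using step1 by (meson dual_order.trans mult_left_mono zero_le)
  have step3: "ennreal (exp (- \<mu> * a)) * ennreal (exp (g v)) ^ n = ennreal (exp (- \<mu> * a + real n * g v))"
  proof -
    have "ennreal (exp (g v)) ^ n = ennreal (exp (g v) ^ n)" by (rule ennreal_power) simp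
    also have "exp (g v) ^ n = exp (real n * g v)" by (rule exp_of_nat_mult[symmetric])
    finally have e1: "ennreal (exp (g v)) ^ n = ennreal (exp (real n * g v))" .
    have "ennreal (exp (- \<mu> * a)) * ennreal (exp (real n * g v)) = ennreal (exp (- \<mu> * a) * exp (real n * g v))"
      by (rule ennreal_mult[symmetric]) auto
    also have "exp (- \<mu> * a) * exp (real n * g v) = exp (- \<mu> * a + real n * g v)" by (rule exp_add[symmetric])
    finally show ?thesis unfolding e1 .
  qed
  have step4: "- \<mu> * a + real n * g v = - real n * g v"
  proof -
    have "C * v = t / sqrt (real n)" unfolding v_def using C sn by simp
    then have "\<mu> * a = 2 * g v / (t / sqrt (real n)) * (t * sqrt (real n))" unfolding \<mu>_def a_def by simp
    also have "\<dots> = 2 * g v * (sqrt (real n) * sqrt (real n))" using sn t by (simp add: field_simps)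
    also have "sqrt (real n) * sqrt (real n) = real n" by simp
    finally have "\<mu> * a = 2 * g v * real n" .
    then show ?thesis by simp
  qed
  have "emeasure M A \<le> ennreal (exp (- real n * g v))" using step2 by (simp only: step3 step4)
  then show ?thesis unfolding A_def[symmetric] v_def[symmetric] using A
    by (simp add: emeasure_eq_measure)
qed



theorem theorem1p1:
  fixes M :: "'a measure" and X :: "nat \<Rightarrow> 'a \<Rightarrow> real" and g :: "real \<Rightarrow> real"
  assumes ps: "prob_space M"
    and rv: "\<And>i. i \<ge> 1 \<Longrightarrow> X i \<in> borel_measurable M"
    and indep: "prob_space.indep_vars M (\<lambda>_. borel) X {1..}"
    and ident: "\<And>i. i \<ge> 1 \<Longrightarrow> distr M borel (X i) = distr M borel (X 1)"
    and sq_int: "integrable M (\<lambda>x. (X 1 x)\<^sup>2)"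
    and centered: "prob_space.expectation M (X 1) = 0"
    and var_nz: "prob_space.variance M (X 1) \<noteq> 0"
    and g_range: "\<And>t. t \<ge> 0 \<Longrightarrow> g t \<ge> 0"
    and g_cont: "continuous_on {0..} g"
    and g_sconv: "strict_convex_on {0..} g"
    and g_pos: "\<And>t. t > 0 \<Longrightarrow> g t > 0"
    and g_super: "filterlim (\<lambda>t. g t / t) at_top at_top"
    and g0: "g 0 = 0"
    and g_deriv: "\<exists>\<delta>>0. \<exists>g' c.
        (\<forall>t\<in>{0..<\<delta>}. (g has_real_derivative g' t) (at t within {0..}))
        \<and> g' 0 = 0 \<and> (g' has_real_derivative c) (at 0 within {0..}) \<and> 0 < c"
    and tail: "\<And>t. t \<ge> 0 \<Longrightarrow>
        measure M {x \<in> space M. \<bar>X 1 x\<bar> > t} \<le> exp (- g t)"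
  shows "\<exists>C1>0. \<forall>n::nat. \<forall>t::real. n \<ge> 1 \<and> t > 0 \<longrightarrow>
      (let S = (\<lambda>x. (\<Sum>i=1..n. X i x) / sqrt (real n));
           B = exp (- real n * g (t / (C1 * sqrt (real n))))
       in max (measure M {x \<in> space M. S x > t}) (measure M {x \<in> space M. S x < - t}) \<le> B
          \<and> measure M {x \<in> space M. \<bar>S x\<bar> > t} \<le> 2 * B)"
proof -
  interpret prob_space M by (rule ps)
  have X1: "X 1 \<in> borel_measurable M" using rv by simp
  obtain C where C32: "C \<ge> 32" and mb: "\<forall>\<sigma>\<in>{1,-1::real}. \<forall>v>0.
     (\<integral>\<^sup>+x. ennreal (exp (2 * g v / (C * v) * (\<sigma> * X 1 x))) \<partial>M) \<le> ennreal (exp (g v))"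
    using mgf_bound[OF X1 centered tail g_range g_cont g_sconv g0 g_super g_deriv] by blast
  have C: "C > 0" using C32 by simp
  have key: "prob {x\<in>space M. \<sigma> * ((\<Sum>i=1..n. X i x) / sqrt (real n)) > t}
      \<le> exp (- real n * g (t / (C * sqrt (real n))))"
    if "\<sigma> \<in> {1,-1::real}" "n \<ge> 1" "t > 0" for \<sigma> n t
  proof (rule chernoff_sum[OF rv indep ident g_range C _ that(2,3)])
    fix v :: real assume "v > 0"
    then show "(\<integral>\<^sup>+x. ennreal (exp (2 * g v / (C * v) * (\<sigma> * X 1 x))) \<partial>M) \<le> ennreal (exp (g v))"
      using mb that(1) by blast
  qed auto
  show ?thesis
  proof (intro exI[of _ C] conjI allI impI)
    show "C > 0" by (rule C)
    fix n :: nat and t :: real assume nt: "n \<ge> 1 \<and> t > 0"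
    define B where "B = exp (- real n * g (t / (C * sqrt (real n))))"
    define S where "S = (\<lambda>x. (\<Sum>i=1..n. X i x) / sqrt (real n))"
    have S[measurable]: "S \<in> borel_measurable M" unfolding S_def
      by (intro borel_measurable_divide borel_measurable_sum) (auto intro: rv)
    have m1: "prob {x\<in>space M. S x > t} \<le> B"
      using key[of 1 n t] nt unfolding S_def B_def by simp
    have e2: "{x\<in>space M. S x < - t} = {x\<in>space M. (-1) * S x > t}" by auto
    have m2: "prob {x\<in>space M. S x < - t} \<le> B"
      using key[of "-1" n t] nt unfolding e2 unfolding S_def B_def by simp
    have "prob {x\<in>space M. \<bar>S x\<bar> > t} \<le> prob ({x\<in>space M. S x > t} \<union> {x\<in>space M. S x < - t})"
      by (intro finite_measure_mono) auto
    also have "\<dots> \<le> prob {x\<in>space M. S x > t} + prob {x\<in>space M. S x < - t}"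
      by (intro measure_Un_le) auto
    finally have m3: "prob {x\<in>space M. \<bar>S x\<bar> > t} \<le> 2 * B" using m1 m2 by simp
    show "let S = (\<lambda>x. (\<Sum>i=1..n. X i x) / sqrt (real n));
           B = exp (- real n * g (t / (C * sqrt (real n))))
       in max (measure M {x \<in> space M. S x > t}) (measure M {x \<in> space M. S x < - t}) \<le> B
          \<and> measure M {x \<in> space M. \<bar>S x\<bar> > t} \<le> 2 * B"
      unfolding Let_def S_def[symmetric] B_def[symmetric] using m1 m2 m3 by simp
  qed
qed


end
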